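(* Let $\psi\in(-\pi,\pi]$, $\tau>0$, and $k\in\mathbb{Z}\setminus\{0\}$. Then for every $(a,w)\in\mathbb{R}\times(\mathbb{C}\setminus\{0\})$ with $|a|<|w|$ and every $s>0$, $(sa,sw)\in\Gamma_k(\psi;\tau)$ if and only if $s = \frac{1}{\tau}\tau^{+}_{k}(a,w)$ (when $k>0$), respectively $s=\frac1\tau\tau^{-}_{-k}(a,w)$ (when $k<0$), and $\operatorname{Arg}(w)=\psi$.
   Context: $\operatorname{Arg}(w)\in(-\pi,\pi]$ is the principal argument; $\arccos:[-1,1]\to[0,\pi]$. For $|a|<|w|$ and integers $n\ge1$: $\tau_n^\pm(a,w) := \frac{1}{\sqrt{|w|^2-a^2}}[\pm\operatorname{Arg}(w)-\arccos(a/|w|)+2n\pi]$. $a(\Omega,\psi;\tau) := -\Omega\cot(\tau\Omega-\psi)$, $\rho(\Omega,\psi;\tau) := -\Omega/\sin(\tau\Omega-\psi)$. For $k\ge1$, $I_k(\psi) := (-\pi,0)+\psi+2k\pi$; for $k\le-1$, $I_k(\psi) := (0,\pi)+\psi+2k\pi$. $\Gamma_k(\psi;\tau) := \{(a(\Omega,\psi;\tau),\,\rho(\Omega,\psi;\tau)e^{i\psi}) : \tau\Omega\in I_k(\psi)\}\subset\mathbb{R}\times\mathbb{C}$. *)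

theory Defs
  imports "HOL-Analysis.Analysis"
begin

text \<open>Arg (HOL-Analysis) is the principal argument in (-pi, pi]; arccos maps [-1,1] to [0,pi].\<close>

definition tau_plus :: "nat \<Rightarrow> real \<Rightarrow> complex \<Rightarrow> real" where
  "tau_plus n a w = (Arg w - arccos (a / cmod w) + 2 * real n * pi) / sqrt ((cmod w)\<^sup>2 - a\<^sup>2)"

definition tau_minus :: "nat \<Rightarrow> real \<Rightarrow> complex \<Rightarrow> real" where
  "tau_minus n a w = (- Arg w - arccos (a / cmod w) + 2 * real n * pi) / sqrt ((cmod w)\<^sup>2 - a\<^sup>2)"

definition a_fun :: "real \<Rightarrow> real \<Rightarrow> real \<Rightarrow> real" where
  "a_fun \<Omega> \<psi> \<tau> = - \<Omega> * cot (\<tau> * \<Omega> - \<psi>)"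

definition rho_fun :: "real \<Rightarrow> real \<Rightarrow> real \<Rightarrow> real" where
  "rho_fun \<Omega> \<psi> \<tau> = - \<Omega> / sin (\<tau> * \<Omega> - \<psi>)"

definition I_k :: "int \<Rightarrow> real \<Rightarrow> real set" where
  "I_k k \<psi> = (if k \<ge> 1 then {-pi + \<psi> + 2 * of_int k * pi <..< \<psi> + 2 * of_int k * pi}
              else {\<psi> + 2 * of_int k * pi <..< pi + \<psi> + 2 * of_int k * pi})"

definition Gamma_k :: "int \<Rightarrow> real \<Rightarrow> real \<Rightarrow> (real \<times> complex) set" where
  "Gamma_k k \<psi> \<tau> = {(a_fun \<Omega> \<psi> \<tau>, complex_of_real (rho_fun \<Omega> \<psi> \<tau>) * cis \<psi>) | \<Omega>. \<tau> * \<Omega> \<in> I_k k \<psi>}"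

end

theory Submission
  imports Defs
begin

lemma arc_facts:
  fixes a :: real and w :: complex
  assumes "\<bar>a\<bar> < cmod w"
  shows "0 < arccos (a / cmod w)" "arccos (a / cmod w) < pi"
    "cos (arccos (a / cmod w)) = a / cmod w"
    "sqrt ((cmod w)\<^sup>2 - a\<^sup>2) = cmod w * sin (arccos (a / cmod w))"
    "cmod w > 0"
proof -
  have r: "cmod w > 0" using assms by linarith
  have c: "-1 < a / cmod w" "a / cmod w < 1" using assms r by (auto simp: field_simps abs_less_iff)
  show "0 < arccos (a / cmod w)" "arccos (a / cmod w) < pi" using arccos_lt_bounded[OF c] by auto
  show "cos (arccos (a / cmod w)) = a / cmod w" using c by simp
  show "cmod w > 0" by fact
  have "sin (arccos (a / cmod w)) = sqrt (1 - (a / cmod w)\<^sup>2)" using c by (simp add: sin_arccos)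
  also have "1 - (a / cmod w)\<^sup>2 = ((cmod w)\<^sup>2 - a\<^sup>2) / (cmod w)\<^sup>2" using r by (simp add: field_simps)
  also have "sqrt \<dots> = sqrt ((cmod w)\<^sup>2 - a\<^sup>2) / cmod w" using r by (simp add: real_sqrt_divide)
  finally show "sqrt ((cmod w)\<^sup>2 - a\<^sup>2) = cmod w * sin (arccos (a / cmod w))" using r by simp
qed

lemma trig_shift:
  fixes k :: int and x :: real
  shows "sin (2 * of_int k * pi - x) = - sin x" "cos (2 * of_int k * pi - x) = cos x"
        "sin (2 * of_int k * pi + x) = sin x" "cos (2 * of_int k * pi + x) = cos x"
proof -
  have s: "sin (2 * of_int k * pi) = 0" and c: "cos (2 * of_int k * pi) = 1"
    using sin_int_2pin[of k] cos_int_2pin[of k] by (simp_all add: mult.commute mult.left_commute)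
  show "sin (2 * of_int k * pi - x) = - sin x" "cos (2 * of_int k * pi - x) = cos x"
       "sin (2 * of_int k * pi + x) = sin x" "cos (2 * of_int k * pi + x) = cos x"
    by (simp_all add: sin_diff cos_diff sin_add cos_add s c)
qed

lemma Arg_sw:
  assumes "s > 0" "w \<noteq> 0" "-pi < \<psi>" "\<psi> \<le> pi" "\<rho> > 0"
    "of_real s * w = complex_of_real \<rho> * cis \<psi>"
  shows "Arg w = \<psi>" "s * cmod w = \<rho>"
proof -
  have "Arg (of_real s * w) = \<psi>"
    using assms by (intro Arg_unique'[of \<rho>]) (auto simp: rcis_def)
  moreover have "Arg (of_real s * w) = Arg w" using assms(1) by (rule Arg_times_of_real)
  ultimately show "Arg w = \<psi>" by simp
  have "cmod (of_real s * w) = \<rho>" using assms(5,6) by (simp add: norm_mult)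
  then show "s * cmod w = \<rho>" using assms(1) by (simp add: norm_mult)
qed

lemma w_cis: assumes "w \<noteq> 0" shows "w = complex_of_real (cmod w) * cis (Arg w)"
  using rcis_cmod_Arg[of w] by (simp add: rcis_def)

lemma pos_case:
  fixes \<psi> \<tau> a s :: real and w :: complex and k :: int
  assumes psi: "-pi < \<psi>" "\<psi> \<le> pi" and tau: "\<tau> > 0" and k: "k \<ge> 1"
    and w: "w \<noteq> 0" and aw: "\<bar>a\<bar> < cmod w" and s: "s > 0"
  shows "(s * a, of_real s * w) \<in> Gamma_k k \<psi> \<tau> \<longleftrightarrow>
          s = tau_plus (nat k) a w / \<tau> \<and> Arg w = \<psi>"
proof -
  define r where "r = cmod w"
  define \<phi> where "\<phi> = arccos (a / r)"
  note AF = arc_facts[OF aw, folded r_def, folded \<phi>_def]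
  have nk: "real (nat k) = of_int k" using k by simp
  have sq: "sqrt (r\<^sup>2 - a\<^sup>2) > 0" using AF sin_gt_zero by auto
  show ?thesis
  proof
    assume "(s * a, of_real s * w) \<in> Gamma_k k \<psi> \<tau>"
    then obtain \<Omega> where O: "\<tau> * \<Omega> \<in> I_k k \<psi>" and ea: "s * a = a_fun \<Omega> \<psi> \<tau>"
      and ew: "of_real s * w = complex_of_real (rho_fun \<Omega> \<psi> \<tau>) * cis \<psi>"
      unfolding Gamma_k_def by auto
    define \<beta> where "\<beta> = 2 * of_int k * pi + \<psi> - \<tau> * \<Omega>"
    have chi: "0 < \<beta>" "\<beta> < pi" using O k unfolding I_k_def \<beta>_def by auto
    have th: "\<tau> * \<Omega> - \<psi> = 2 * of_int k * pi - \<beta>" unfolding \<beta>_def by simp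
    have sc: "sin \<beta> > 0" using chi sin_gt_zero by auto
    have "\<tau> * \<Omega> > 0"
    proof -
      have "(1::real) \<le> of_int k" using k by simp
      then have "2 * pi \<le> 2 * of_int k * pi" by simp
      moreover have "\<psi> - pi + 2 * of_int k * pi < \<tau> * \<Omega>" using O k unfolding I_k_def by auto
      ultimately show ?thesis using psi by linarith
    qed
    then have Op: "\<Omega> > 0" using tau by (simp add: zero_less_mult_iff)
    have rho: "rho_fun \<Omega> \<psi> \<tau> = \<Omega> / sin \<beta>"
      unfolding rho_fun_def th trig_shift by simp
    have afun: "a_fun \<Omega> \<psi> \<tau> = \<Omega> * cos \<beta> / sin \<beta>"
      unfolding a_fun_def th cot_def trig_shift by simp
    have rp: "\<Omega> / sin \<beta> > 0" using Op sc by simp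
    from Arg_sw[OF s w psi rp ew[unfolded rho]]
    have A: "Arg w = \<psi>" and sr: "s * r = \<Omega> / sin \<beta>" by (auto simp: r_def)
    have "s * a = s * r * cos \<beta>" using ea afun sr by simp
    then have "cos \<beta> = a / r" using s AF(5) by (simp add: field_simps)
    then have ph: "\<phi> = \<beta>" unfolding \<phi>_def using arccos_cos[of \<beta>] chi by simp
    have "\<Omega> = s * r * sin \<beta>" using sr sc by (simp add: field_simps)
    then have "\<Omega> = s * sqrt (r\<^sup>2 - a\<^sup>2)" using AF(4) ph by simp
    then have "\<tau> * s * sqrt (r\<^sup>2 - a\<^sup>2) = 2 * of_int k * pi + \<psi> - \<phi>" using ph \<beta>_def by simp
    then have "s = (Arg w - \<phi> + 2 * real (nat k) * pi) / sqrt (r\<^sup>2 - a\<^sup>2) / \<tau>"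
      using sq tau A nk by (simp add: field_simps)
    then show "s = tau_plus (nat k) a w / \<tau> \<and> Arg w = \<psi>"
      using A unfolding tau_plus_def r_def \<phi>_def by simp
  next
    assume H: "s = tau_plus (nat k) a w / \<tau> \<and> Arg w = \<psi>"
    define \<Omega> where "\<Omega> = s * sqrt (r\<^sup>2 - a\<^sup>2)"
    have tO: "\<tau> * \<Omega> = 2 * of_int k * pi + \<psi> - \<phi>"
      using H tau sq nk unfolding \<Omega>_def tau_plus_def r_def[symmetric] \<phi>_def[symmetric]
      by (simp add: field_simps)
    have th: "\<tau> * \<Omega> - \<psi> = 2 * of_int k * pi - \<phi>" using tO by simp
    have sp: "sin \<phi> > 0" using AF sin_gt_zero by auto
    have mem: "\<tau> * \<Omega> \<in> I_k k \<psi>" using k AF tO unfolding I_k_def by auto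
    have rho: "rho_fun \<Omega> \<psi> \<tau> = s * r"
      unfolding rho_fun_def th trig_shift using sp by (simp add: \<Omega>_def AF(4))
    have afun: "a_fun \<Omega> \<psi> \<tau> = s * a"
      unfolding a_fun_def th cot_def trig_shift using sp AF(5) by (simp add: \<Omega>_def AF(4) AF(3))
    have ew: "of_real s * w = complex_of_real (s * r) * cis \<psi>"
      using w_cis[OF w] H unfolding r_def by (metis mult.assoc of_real_mult)
    show "(s * a, of_real s * w) \<in> Gamma_k k \<psi> \<tau>"
      unfolding Gamma_k_def using mem rho afun ew by (auto intro!: exI[of _ \<Omega>])
  qed
qed

lemma neg_case:
  fixes \<psi> \<tau> a s :: real and w :: complex and k :: int
  assumes psi: "-pi < \<psi>" "\<psi> \<le> pi" and tau: "\<tau> > 0" and k: "k \<le> -1"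
    and w: "w \<noteq> 0" and aw: "\<bar>a\<bar> < cmod w" and s: "s > 0"
  shows "(s * a, of_real s * w) \<in> Gamma_k k \<psi> \<tau> \<longleftrightarrow>
          s = tau_minus (nat (-k)) a w / \<tau> \<and> Arg w = \<psi>"
proof -
  define r where "r = cmod w"
  define \<phi> where "\<phi> = arccos (a / r)"
  note AF = arc_facts[OF aw, folded r_def, folded \<phi>_def]
  have nk: "real (nat (-k)) = - of_int k" using k by simp
  have sq: "sqrt (r\<^sup>2 - a\<^sup>2) > 0" using AF sin_gt_zero by auto
  show ?thesis
  proof
    assume "(s * a, of_real s * w) \<in> Gamma_k k \<psi> \<tau>"
    then obtain \<Omega> where O: "\<tau> * \<Omega> \<in> I_k k \<psi>" and ea: "s * a = a_fun \<Omega> \<psi> \<tau>"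
      and ew: "of_real s * w = complex_of_real (rho_fun \<Omega> \<psi> \<tau>) * cis \<psi>"
      unfolding Gamma_k_def by auto
    define \<beta> where "\<beta> = \<tau> * \<Omega> - \<psi> - 2 * of_int k * pi"
    have beta: "0 < \<beta>" "\<beta> < pi" using O k unfolding I_k_def \<beta>_def by auto
    have th: "\<tau> * \<Omega> - \<psi> = 2 * of_int k * pi + \<beta>" unfolding \<beta>_def by simp
    have sc: "sin \<beta> > 0" using beta sin_gt_zero by auto
    have "\<tau> * \<Omega> < 0"
    proof -
      have "of_int k \<le> (-1::real)" using k by simp
      then have "2 * of_int k * pi \<le> - 2 * pi"
        using mult_right_mono[of "of_int k" "-1::real" pi] pi_gt_zero by linarith
      moreover have "\<tau> * \<Omega> < pi + \<psi> + 2 * of_int k * pi" using O k unfolding I_k_def by auto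
      ultimately show ?thesis using psi by linarith
    qed
    then have Op: "\<Omega> < 0" using tau by (simp add: mult_less_0_iff)
    have rho: "rho_fun \<Omega> \<psi> \<tau> = - \<Omega> / sin \<beta>"
      unfolding rho_fun_def th trig_shift by simp
    have afun: "a_fun \<Omega> \<psi> \<tau> = - \<Omega> * cos \<beta> / sin \<beta>"
      unfolding a_fun_def th cot_def trig_shift by simp
    have rp: "- \<Omega> / sin \<beta> > 0" using Op sc by (simp add: divide_neg_pos)
    from Arg_sw[OF s w psi rp ew[unfolded rho]]
    have A: "Arg w = \<psi>" and sr: "s * r = - \<Omega> / sin \<beta>" by (auto simp: r_def)
    have "s * a = s * r * cos \<beta>" using ea afun sr by simp
    then have "cos \<beta> = a / r" using s AF(5) by (simp add: field_simps)
    then have ph: "\<phi> = \<beta>" unfolding \<phi>_def using arccos_cos[of \<beta>] beta by simp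
    have "- \<Omega> = s * r * sin \<beta>" using sr sc by (simp add: field_simps)
    then have "- \<Omega> = s * sqrt (r\<^sup>2 - a\<^sup>2)" using AF(4) ph by simp
    then have "\<tau> * \<Omega> = - (\<tau> * s * sqrt (r\<^sup>2 - a\<^sup>2))" by (metis minus_minus mult.assoc mult_minus_right)
    then have "\<tau> * s * sqrt (r\<^sup>2 - a\<^sup>2) = - 2 * of_int k * pi - \<psi> - \<phi>" using ph \<beta>_def
      by linarith
    then have "s = (- Arg w - \<phi> + 2 * real (nat (-k)) * pi) / sqrt (r\<^sup>2 - a\<^sup>2) / \<tau>"
      using sq tau A nk by (simp add: field_simps)
    then show "s = tau_minus (nat (-k)) a w / \<tau> \<and> Arg w = \<psi>"
      using A unfolding tau_minus_def r_def \<phi>_def by simp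
  next
    assume H: "s = tau_minus (nat (-k)) a w / \<tau> \<and> Arg w = \<psi>"
    define \<Omega> where "\<Omega> = - s * sqrt (r\<^sup>2 - a\<^sup>2)"
    have tO: "\<tau> * \<Omega> = 2 * of_int k * pi + \<psi> + \<phi>"
      using H tau sq nk unfolding \<Omega>_def tau_minus_def r_def[symmetric] \<phi>_def[symmetric]
      by (simp add: field_simps)
    have th: "\<tau> * \<Omega> - \<psi> = 2 * of_int k * pi + \<phi>" using tO by simp
    have sp: "sin \<phi> > 0" using AF sin_gt_zero by auto
    have mem: "\<tau> * \<Omega> \<in> I_k k \<psi>" using k AF tO unfolding I_k_def by auto
    have rho: "rho_fun \<Omega> \<psi> \<tau> = s * r"
      unfolding rho_fun_def th trig_shift using sp by (simp add: \<Omega>_def AF(4))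
    have afun: "a_fun \<Omega> \<psi> \<tau> = s * a"
      unfolding a_fun_def th cot_def trig_shift using sp AF(5) by (simp add: \<Omega>_def AF(4) AF(3))
    have ew: "of_real s * w = complex_of_real (s * r) * cis \<psi>"
      using w_cis[OF w] H unfolding r_def by (metis mult.assoc of_real_mult)
    show "(s * a, of_real s * w) \<in> Gamma_k k \<psi> \<tau>"
      unfolding Gamma_k_def using mem rho afun ew by (auto intro!: exI[of _ \<Omega>])
  qed
qed

theorem mainTheorem20:
  fixes \<psi> \<tau> :: real and k :: int
  assumes "-pi < \<psi>" "\<psi> \<le> pi" "\<tau> > 0" "k \<noteq> 0"
  shows "\<forall>(a::real) (w::complex) (s::real). w \<noteq> 0 \<longrightarrow> \<bar>a\<bar> < cmod w \<longrightarrow> s > 0 \<longrightarrow>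
           ((s * a, of_real s * w) \<in> Gamma_k k \<psi> \<tau> \<longleftrightarrow>
             (if k > 0 then s = tau_plus (nat k) a w / \<tau> else s = tau_minus (nat (- k)) a w / \<tau>)
             \<and> Arg w = \<psi>)"
proof (intro allI impI)
  fix a s :: real and w :: complex
  assume "w \<noteq> 0" "\<bar>a\<bar> < cmod w" "s > 0"
  then show "((s * a, of_real s * w) \<in> Gamma_k k \<psi> \<tau> \<longleftrightarrow>
             (if k > 0 then s = tau_plus (nat k) a w / \<tau> else s = tau_minus (nat (- k)) a w / \<tau>)
             \<and> Arg w = \<psi>)"
    using pos_case[OF assms(1-3)] neg_case[OF assms(1-3)] assms(4)
    by (cases "k > 0") auto
qed

end
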